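(* Let $n\geq 3$ and let $C_n^*$ be the bigraded complex described in the context. Then \[\operatorname{gr}_{\mathcal{V}}\alpha_s^*\leq \operatorname{gr}_{\mathcal{V}}\alpha_n^*-2n\ \text{ for } 1\leq s\leq n-1,\qquad \operatorname{gr}_{\mathcal{V}}\widetilde{\alpha}_s^*\leq \operatorname{gr}_{\mathcal{V}}\alpha_n^*-2n\ \text{ for } 1\leq s\leq n-2,\] and \[\operatorname{gr}_{\mathcal{U}}\alpha_s^*\leq \operatorname{gr}_{\mathcal{U}}\alpha_n^*-2n\ \text{ for } n+1\leq s\leq 2n-1,\qquad \operatorname{gr}_{\mathcal{U}}\widetilde{\alpha}_s^*\leq \operatorname{gr}_{\mathcal{U}}\alpha_n^*-2n\ \text{ for } n+1\leq s\leq 2n-2.\]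
   Context: Let $\mathbb{F}=\mathbb{Z}/2$ and $R=\mathbb{F}[\mathcal{U},\mathcal{V}]$, bigraded by $(\operatorname{gr}_{\mathcal{U}},\operatorname{gr}_{\mathcal{V}})$ with $\mathcal{U}$ of bigrading $(-2,0)$ and $\mathcal{V}$ of bigrading $(0,-2)$. For $n\geq 3$, $C_n^*$ is the free $R$-module with basis $\alpha^*_s$ ($1\leq s\leq 2n-1$); $\widetilde{\alpha}^*_s$ ($1\leq s\leq n-2$ and $n+1\leq s\leq 2n-2$); $b^{*,(s)}_{n-1}$ ($1\leq s\leq n-2$); $b^{*,(s)}_{n}$ ($1\leq s\leq 2n-2$); $b^{*,(s)}_{n+1}$ ($n+1\leq s\leq 2n-2$), with $R$-linear differential $\partial$ given by $\partial\alpha^*_s=0$, $\partial\widetilde{\alpha}^*_s=0$, and $\partial b^{*,(s)}_{n-1}=\mathcal{U}^{n(n-1)/2}\mathcal{V}^{n(n-1)/2}\alpha^*_s+\mathcal{V}^{n-s-1}\widetilde{\alpha}^*_s$ for $1\leq s\leq n-2$; $\partial b^{*,(s)}_{n}=\mathcal{U}^{n(n+1)/2-s}\mathcal{V}^{n(n+1)/2}\alpha^*_{s+1}+\mathcal{U}^{n}\widetilde{\alpha}^*_s$ for $1\leq s\leq n-2$; $\partial b^{*,(s)}_{n}=\mathcal{U}^{n(n+1)/2}\mathcal{V}^{n(n-1)/2-n+s+1}\alpha^*_s+\mathcal{U}^{n(n+1)/2-s}\mathcal{V}^{n(n+1)/2}\alpha^*_{s+1}$ for $n-1\leq s\leq n$;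 $\partial b^{*,(s)}_{n}=\mathcal{U}^{n(n+1)/2}\mathcal{V}^{n(n-1)/2-n+s+1}\alpha^*_s+\mathcal{V}^{n}\widetilde{\alpha}^*_s$ for $n+1\leq s\leq 2n-2$; $\partial b^{*,(s)}_{n+1}=\mathcal{U}^{n(n-1)/2}\mathcal{V}^{n(n-1)/2}\alpha^*_{s+1}+\mathcal{U}^{s-n}\widetilde{\alpha}^*_s$ for $n+1\leq s\leq 2n-2$. The basis elements are assigned bigradings $(\operatorname{gr}_{\mathcal{U}},\operatorname{gr}_{\mathcal{V}})$ so that $\partial$ is homogeneous of bigrading $(-1,-1)$; such a bigrading is unique up to an overall shift, and any such choice is fixed. *)

theory Defs
  imports Main
begin

text \<open>Generators of the free R-module C_n^*, R = F_2[U,V].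
  Alpha s = alpha^*_s, AlphaT s = tilde-alpha^*_s,
  Bm s = b^{*,(s)}_{n-1}, B0 s = b^{*,(s)}_n, Bp s = b^{*,(s)}_{n+1}.\<close>
datatype gen = Alpha nat | AlphaT nat | Bm nat | B0 nat | Bp nat

fun in_basis :: "nat \<Rightarrow> gen \<Rightarrow> bool" where
  "in_basis n (Alpha s) = (1 \<le> s \<and> s \<le> 2*n - 1)"
| "in_basis n (AlphaT s) = ((1 \<le> s \<and> s \<le> n - 2) \<or> (n + 1 \<le> s \<and> s \<le> 2*n - 2))"
| "in_basis n (Bm s) = (1 \<le> s \<and> s \<le> n - 2)"
| "in_basis n (B0 s) = (1 \<le> s \<and> s \<le> 2*n - 2)"
| "in_basis n (Bp s) = (n + 1 \<le> s \<and> s \<le> 2*n - 2)"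

text \<open>The differential of a basis element, as the list of its monomial terms
  (a, b, x) standing for U^a V^b x (coefficients in F_2, all terms distinct).\<close>
fun dterms :: "nat \<Rightarrow> gen \<Rightarrow> (nat \<times> nat \<times> gen) list" where
  "dterms n (Alpha s) = []"
| "dterms n (AlphaT s) = []"
| "dterms n (Bm s) =
     [(n*(n-1) div 2, n*(n-1) div 2, Alpha s), (0, n - s - 1, AlphaT s)]"
| "dterms n (B0 s) =
     (if s \<le> n - 2 then
        [(n*(n+1) div 2 - s, n*(n+1) div 2, Alpha (s+1)), (n, 0, AlphaT s)]
      else if s \<le> n then
        [(n*(n+1) div 2, n*(n-1) div 2 + s + 1 - n, Alpha s),
         (n*(n+1) div 2 - s, n*(n+1) div 2, Alpha (s+1))]
      else
        [(n*(n+1) div 2, n*(n-1) div 2 + s + 1 - n, Alpha s), (0, n, AlphaT s)])"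
| "dterms n (Bp s) =
     [(n*(n-1) div 2, n*(n-1) div 2, Alpha (s+1)), (s - n, 0, AlphaT s)]"

text \<open>A bigrading (grU, grV) of the basis (U has bigrading (-2,0), V has (0,-2))
  for which the differential is homogeneous of bigrading (-1,-1).\<close>
definition valid_bigrading :: "nat \<Rightarrow> (gen \<Rightarrow> int) \<Rightarrow> (gen \<Rightarrow> int) \<Rightarrow> bool" where
  "valid_bigrading n grU grV \<longleftrightarrow>
     (\<forall>g. in_basis n g \<longrightarrow> (\<forall>(a, b, x) \<in> set (dterms n g).
         grU x - 2 * int a = grU g - 1 \<and> grV x - 2 * int b = grV g - 1))"

end

theory Submission
  imports Defs
begin

lemma NM: "(n::nat) * (n+1) div 2 = n*(n-1) div 2 + n"
proof -
  have "n*(n+1) = n*(n-1) + n*2" by (cases n) (auto simp: algebra_simps)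
  then show ?thesis by simp
qed

lemma Nge: "(n::nat) \<le> n*(n+1) div 2" using NM[of n] by simp

lemma inst:
  assumes "valid_bigrading n grU grV" "in_basis n g" "(a,b,x) \<in> set (dterms n g)"
  shows "grU x - 2 * int a = grU g - 1 \<and> grV x - 2 * int b = grV g - 1"
  using assms unfolding valid_bigrading_def by fastforce

lemma V1:
  assumes "valid_bigrading n grU grV" "n \<ge> 3" "1 \<le> s" "s \<le> n - 2"
  shows "grV (Alpha s) \<le> grV (Alpha (s+1)) \<and> grV (AlphaT s) \<le> grV (Alpha (s+1)) - 2 * int n"
proof -
  let ?N = "n*(n+1) div 2" and ?M = "n*(n-1) div 2"
  have a: "grV (Alpha s) - 2 * int ?M = grV (Bm s) - 1"
    using inst[OF assms(1), of "Bm s" ?M ?M "Alpha s"] assms by simp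
  have b: "grV (AlphaT s) - 2 * int (n - s - 1) = grV (Bm s) - 1"
    using inst[OF assms(1), of "Bm s" 0 "n-s-1" "AlphaT s"] assms by simp
  have c: "grV (Alpha (s+1)) - 2 * int ?N = grV (B0 s) - 1"
    using inst[OF assms(1), of "B0 s" "?N - s" ?N "Alpha (s+1)"] assms by simp
  have d: "grV (AlphaT s) = grV (B0 s) - 1"
    using inst[OF assms(1), of "B0 s" n 0 "AlphaT s"] assms by simp
  have "int ?N = int ?M + int n" using NM[of n] by simp
  with a b c d show ?thesis by simp
qed

lemma V2:
  assumes "valid_bigrading n grU grV" "n \<ge> 3"
  shows "grV (Alpha (n-1)) = grV (Alpha n) - 2 * int n"
proof -
  obtain m where m: "n = Suc m" using assms(2) by (cases n) auto
  let ?N = "n*(n+1) div 2" and ?M = "n*(n-1) div 2"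
  have ib: "in_basis n (B0 m)" using m assms(2) by simp
  have dt: "dterms n (B0 m) = [(?N, ?M, Alpha m), (?N - m, ?N, Alpha n)]"
    using m assms(2) by simp
  have c1: "grV (Alpha m) - 2 * int ?M = grV (B0 m) - 1"
    using inst[OF assms(1) ib, of ?N ?M "Alpha m"] dt by simp
  have c2: "grV (Alpha n) - 2 * int ?N = grV (B0 m) - 1"
    using inst[OF assms(1) ib, of "?N - m" ?N "Alpha n"] dt by simp
  have "int ?N = int ?M + int n" using NM[of n] by simp
  then show ?thesis using c1 c2 m by simp
qed

lemma U1:
  assumes "valid_bigrading n grU grV" "n \<ge> 3" "n+1 \<le> s" "s \<le> 2*n - 2"
  shows "grU (Alpha (s+1)) \<le> grU (Alpha s) \<and> grU (AlphaT s) \<le> grU (Alpha s) - 2 * int n"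
proof -
  let ?N = "n*(n+1) div 2" and ?M = "n*(n-1) div 2"
  have a: "grU (Alpha (s+1)) - 2 * int ?M = grU (Bp s) - 1"
    using inst[OF assms(1), of "Bp s" ?M ?M "Alpha (s+1)"] assms by simp
  have b: "grU (AlphaT s) - 2 * int (s - n) = grU (Bp s) - 1"
    using inst[OF assms(1), of "Bp s" "s-n" 0 "AlphaT s"] assms by simp
  have c: "grU (Alpha s) - 2 * int ?N = grU (B0 s) - 1"
    using inst[OF assms(1), of "B0 s" ?N "?M + s + 1 - n" "Alpha s"] assms by simp
  have d: "grU (AlphaT s) = grU (B0 s) - 1"
    using inst[OF assms(1), of "B0 s" 0 n "AlphaT s"] assms by simp
  have "int ?N = int ?M + int n" using NM[of n] by simp
  with a b c d show ?thesis by simp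
qed

lemma U2:
  assumes "valid_bigrading n grU grV" "n \<ge> 3"
  shows "grU (Alpha (n+1)) = grU (Alpha n) - 2 * int n"
proof -
  let ?N = "n*(n+1) div 2" and ?M = "n*(n-1) div 2"
  have c: "grU (Alpha n) - 2 * int ?N = grU (B0 n) - 1
         \<and> grU (Alpha (n+1)) - 2 * int (?N - n) = grU (B0 n) - 1"
    using inst[OF assms(1), of "B0 n" ?N "?M + n + 1 - n" "Alpha n"]
          inst[OF assms(1), of "B0 n" "?N - n" ?N "Alpha (n+1)"] assms by simp
  have "int ?N = int ?M + int n" using NM[of n] by simp
  moreover have "?N - n = ?M" using NM[of n] by simp
  ultimately show ?thesis using c by simp
qed

theorem lemma2p8:
  fixes n :: nat and grU grV :: "gen \<Rightarrow> int"
  assumes "n \<ge> 3"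
    and "valid_bigrading n grU grV"
  shows "(\<forall>s. 1 \<le> s \<and> s \<le> n - 1 \<longrightarrow> grV (Alpha s) \<le> grV (Alpha n) - 2 * int n)
       \<and> (\<forall>s. 1 \<le> s \<and> s \<le> n - 2 \<longrightarrow> grV (AlphaT s) \<le> grV (Alpha n) - 2 * int n)
       \<and> (\<forall>s. n + 1 \<le> s \<and> s \<le> 2*n - 1 \<longrightarrow> grU (Alpha s) \<le> grU (Alpha n) - 2 * int n)
       \<and> (\<forall>s. n + 1 \<le> s \<and> s \<le> 2*n - 2 \<longrightarrow> grU (AlphaT s) \<le> grU (Alpha n) - 2 * int n)"
proof -
  have P1: "grV (Alpha (n - 1 - k)) \<le> grV (Alpha n) - 2 * int n" if "k \<le> n - 2" for k
    using that
  proof (induction k)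
    case 0 then show ?case using V2[OF assms(2,1)] by simp
  next
    case (Suc k)
    have "grV (Alpha (n - 1 - Suc k)) \<le> grV (Alpha (n - 1 - Suc k + 1))"
      using V1[OF assms(2,1), of "n - 1 - Suc k"] Suc.prems by simp
    moreover have "n - 1 - Suc k + 1 = n - 1 - k" using Suc.prems by simp
    ultimately show ?case using Suc by simp
  qed
  have A: "grV (Alpha s) \<le> grV (Alpha n) - 2 * int n" if "1 \<le> s" "s \<le> n - 1" for s
    using P1[of "n - 1 - s"] that by simp
  have B: "grV (AlphaT s) \<le> grV (Alpha n) - 2 * int n" if "1 \<le> s" "s \<le> n - 2" for s
  proof -
    have "s + 1 \<le> n - 1" using that assms(1) by simp
    then show ?thesis using A[of "s+1"] V1[OF assms(2,1), of s] that by simp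
  qed
  have P2: "grU (Alpha (n + 1 + k)) \<le> grU (Alpha n) - 2 * int n" if "k \<le> n - 2" for k
    using that
  proof (induction k)
    case 0 then show ?case using U2[OF assms(2,1)] by simp
  next
    case (Suc k)
    have "grU (Alpha (n + 1 + k + 1)) \<le> grU (Alpha (n + 1 + k))"
      using U1[OF assms(2,1), of "n + 1 + k"] Suc.prems by simp
    then show ?case using Suc by simp
  qed
  have C: "grU (Alpha s) \<le> grU (Alpha n) - 2 * int n" if "n + 1 \<le> s" "s \<le> 2*n - 1" for s
    using P2[of "s - n - 1"] that by simp
  have D: "grU (AlphaT s) \<le> grU (Alpha n) - 2 * int n" if "n + 1 \<le> s" "s \<le> 2*n - 2" for s
  proof -
    have "s \<le> 2*n - 1" using that by simp
    then show ?thesis using C[of s] U1[OF assms(2,1), of s] that by simp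
  qed
  show ?thesis using A B C D by blast
qed

end
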